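(* Let $\{g_k\}_{k\ge1}\subset\mathbb{R}^{+}\cup\{0\}$ and for $n=1,2,\dots$ define $\Gamma_{(n)}:\mathcal{O}\to\mathcal{O}$ by $$\Gamma_{(n)}\varphi(x)=\frac{\varphi(x)\exp\!\left(x\sum_{k=1}^{n}g_k\right)}{\sum_{y\in E_\varphi}\varphi(y)\exp\!\left(y\sum_{k=1}^{n}g_k\right)},\qquad x\in\mathbb{R}.$$ Then for any NFD $\varphi\in\mathcal{O}$ with $E_\varphi\subset[0,\infty)$ and any positive integers $n>m$, $$d\big(\Gamma_{(n)}\varphi,\Gamma_{(m)}\varphi\big)\le\sum_{x\in E_\varphi}\left(\exp\!\left(x\sum_{k=m+1}^{n}g_k\right)-1\right).$$
   Context: A normalized fitness distribution (NFD) is a function $\varphi:\mathbb{R}\to[0,1]$ whose support $E_\varphi=\{x:\varphi(x)\neq0\}$ is finite and which satisfies $\sum_{x\in E_\varphi}\varphi(x)=1$; $\mathcal{O}$ denotes the space of all NFDs. The metric $d$ on $\mathcal{O}$ is $d(\varphi_1,\varphi_2)=\sum_{x\in E_{\varphi_1}\cup E_{\varphi_2}}|\varphi_1(x)-\varphi_2(x)|$. In the paper, NFDs arise from populations with a fitness function $f:\Omega\to\mathbb{R}^{+}\cup\{0\}$, so fitness values are nonnegative. *)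

theory Defs
  imports "HOL-Analysis.Analysis"
begin

definition supp_nfd :: "(real \<Rightarrow> real) \<Rightarrow> real set" where
  "supp_nfd \<phi> = {x. \<phi> x \<noteq> 0}"

definition is_nfd :: "(real \<Rightarrow> real) \<Rightarrow> bool" where
  "is_nfd \<phi> \<longleftrightarrow> (\<forall>x. 0 \<le> \<phi> x \<and> \<phi> x \<le> 1) \<and> finite (supp_nfd \<phi>)
      \<and> (\<Sum>x\<in>supp_nfd \<phi>. \<phi> x) = 1"

definition nfd_dist :: "(real \<Rightarrow> real) \<Rightarrow> (real \<Rightarrow> real) \<Rightarrow> real" where
  "nfd_dist \<phi>1 \<phi>2 = (\<Sum>x\<in>supp_nfd \<phi>1 \<union> supp_nfd \<phi>2. \<bar>\<phi>1 x - \<phi>2 x\<bar>)"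

definition Gamma_n :: "(nat \<Rightarrow> real) \<Rightarrow> nat \<Rightarrow> (real \<Rightarrow> real) \<Rightarrow> (real \<Rightarrow> real)" where
  "Gamma_n g n \<phi> = (\<lambda>x. \<phi> x * exp (x * (\<Sum>k=1..n. g k)) /
      (\<Sum>y\<in>supp_nfd \<phi>. \<phi> y * exp (y * (\<Sum>k=1..n. g k))))"

end

theory Submission
  imports Defs
begin

lemma key_ineq:
  fixes S :: "'a set" and p c :: "'a \<Rightarrow> real"
  assumes fin: "finite S" and p0: "\<And>x. x \<in> S \<Longrightarrow> p x \<ge> 0" and p1: "sum p S = 1"
    and c0: "\<And>x. x \<in> S \<Longrightarrow> c x \<ge> 0"
  shows "(\<Sum>x\<in>S. p x * \<bar>c x - (\<Sum>y\<in>S. p y * c y)\<bar>) \<le> sum c S"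
proof -
  define D where "D = (\<Sum>y\<in>S. p y * c y)"
  have pt: "\<bar>c x - D\<bar> \<le> c x + D - 2 * p x * c x" if xS: "x \<in> S" for x
  proof -
    have "c x - D = (\<Sum>y\<in>S. p y * (c x - c y))"
    proof -
      have "(\<Sum>y\<in>S. p y * (c x - c y)) = (\<Sum>y\<in>S. p y) * c x - D"
        by (simp add: D_def right_diff_distrib sum_subtractf sum_distrib_right)
      thus ?thesis by (simp add: p1)
    qed
    hence "\<bar>c x - D\<bar> \<le> (\<Sum>y\<in>S. \<bar>p y * (c x - c y)\<bar>)"
      by (simp add: sum_abs)
    also have "\<dots> \<le> (\<Sum>y\<in>S. p y * (c x + c y) - (if y = x then 2 * p y * c x else 0))"
    proof (rule sum_mono)
      fix y assume yS: "y \<in> S"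
      show "\<bar>p y * (c x - c y)\<bar> \<le> p y * (c x + c y) - (if y = x then 2 * p y * c x else 0)"
      proof (cases "y = x")
        case True thus ?thesis by simp
      next
        case False
        have "\<bar>c x - c y\<bar> \<le> c x + c y" using c0[OF xS] c0[OF yS] by linarith
        hence "p y * \<bar>c x - c y\<bar> \<le> p y * (c x + c y)" using p0[OF yS] by (rule mult_left_mono)
        thus ?thesis using False p0[OF yS] by (simp add: abs_mult)
      qed
    qed
    also have "\<dots> = c x + D - 2 * p x * c x"
    proof -
      have e1: "(\<Sum>y\<in>S. (if y = x then 2 * p y * c x else 0)) = 2 * p x * c x"
        using xS fin by (simp add: sum.delta)
      have e2: "(\<Sum>y\<in>S. p y * (c x + c y)) = c x + D"
      proof -
        have "(\<Sum>y\<in>S. p y * (c x + c y)) = (\<Sum>y\<in>S. p y) * c x + D"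
          by (simp add: D_def distrib_left sum.distrib sum_distrib_right)
        thus ?thesis by (simp add: p1)
      qed
      show ?thesis by (simp only: sum_subtractf e1 e2)
    qed
    finally show ?thesis .
  qed
  have "(\<Sum>x\<in>S. p x * \<bar>c x - D\<bar>) \<le> (\<Sum>x\<in>S. p x * (c x + D - 2 * p x * c x))"
    by (rule sum_mono, rule mult_left_mono[OF pt p0]) auto
  also have "\<dots> = (\<Sum>x\<in>S. (2 * p x - 2 * p x * p x) * c x)"
  proof -
    have f1: "\<And>x. p x * (c x + D - 2 * p x * c x) = (p x * c x + p x * D) - 2 * (p x * p x * c x)"
      by (simp add: algebra_simps)
    have f2: "\<And>x. (2 * p x - 2 * p x * p x) * c x = 2 * (p x * c x) - 2 * (p x * p x * c x)"
      by (simp add: algebra_simps)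
    have "(\<Sum>x\<in>S. p x * (c x + D - 2 * p x * c x)) = D + sum p S * D - 2 * (\<Sum>x\<in>S. p x * p x * c x)"
      unfolding f1 by (simp only: sum_subtractf sum.distrib sum_distrib_left[symmetric] sum_distrib_right[symmetric] D_def)
    also have "\<dots> = 2 * D - 2 * (\<Sum>x\<in>S. p x * p x * c x)" by (simp add: p1)
    also have "\<dots> = (\<Sum>x\<in>S. (2 * p x - 2 * p x * p x) * c x)"
      unfolding f2 by (simp only: sum_subtractf sum_distrib_left[symmetric] D_def)
    finally show ?thesis .
  qed
  also have "\<dots> \<le> sum c S"
  proof (rule sum_mono)
    fix x assume xS: "x \<in> S"
    have "2 * p x - 2 * p x * p x \<le> 1"
    proof -
      have "0 \<le> (2 * p x - 1) * (2 * p x - 1)" by simp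
      thus ?thesis by (simp add: algebra_simps)
    qed
    thus "(2 * p x - 2 * p x * p x) * c x \<le> c x"
      using mult_right_mono[OF _ c0[OF xS]] by fastforce
  qed
  finally show ?thesis by (simp add: D_def)
qed

lemma supp_Gamma:
  assumes pos: "(\<Sum>y\<in>supp_nfd \<phi>. \<phi> y * exp (y * (\<Sum>k=1..j. g k))) > 0"
  shows "supp_nfd (Gamma_n g j \<phi>) = supp_nfd \<phi>"
  using pos unfolding supp_nfd_def Gamma_n_def by auto

theorem lemma2:
  fixes g :: "nat \<Rightarrow> real" and \<phi> :: "real \<Rightarrow> real" and n m :: nat
  assumes g_nonneg: "\<And>k. k \<ge> 1 \<Longrightarrow> g k \<ge> 0"
    and nfd: "is_nfd \<phi>"
    and supp_nonneg: "supp_nfd \<phi> \<subseteq> {0..}"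
    and m_pos: "m \<ge> 1" and mn: "m < n"
  shows "nfd_dist (Gamma_n g n \<phi>) (Gamma_n g m \<phi>)
           \<le> (\<Sum>x\<in>supp_nfd \<phi>. exp (x * (\<Sum>k=m+1..n. g k)) - 1)"
proof -
  define S where "S = supp_nfd \<phi>"
  have fin: "finite S" and sum1: "sum \<phi> S = 1" and phi01: "\<And>x. 0 \<le> \<phi> x"
    using nfd unfolding is_nfd_def S_def by auto
  have phipos: "\<phi> x > 0" if "x \<in> S" for x
    using that phi01[of x] unfolding S_def supp_nfd_def by force
  have Sne: "S \<noteq> {}" using sum1 by auto
  define Gm where "Gm = (\<Sum>k=1..m. g k)"
  define H where "H = (\<Sum>k=m+1..n. g k)"
  have Gn: "(\<Sum>k=1..n. g k) = Gm + H"
  proof -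
    have "(\<Sum>k=1..m + (n - m). g k) = (\<Sum>k=1..m. g k) + (\<Sum>k=m+1..m + (n - m). g k)"
      by (rule sum.ub_add_nat) (use m_pos in simp)
    thus ?thesis using mn by (simp add: Gm_def H_def)
  qed
  have H0: "H \<ge> 0" unfolding H_def by (rule sum_nonneg) (use g_nonneg in auto)
  define a where "a x = exp (x * Gm)" for x
  define b where "b x = exp (x * H)" for x
  have expn: "exp (x * (\<Sum>k=1..n. g k)) = a x * b x" for x
    unfolding Gn a_def b_def by (simp add: distrib_left exp_add)
  define A where "A = (\<Sum>y\<in>S. \<phi> y * a y)"
  define B where "B = (\<Sum>y\<in>S. \<phi> y * a y * b y)"
  have Apos: "A > 0" unfolding A_def
    by (rule sum_pos[OF fin Sne]) (use phipos in \<open>simp add: a_def\<close>)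
  have Bpos: "B > 0" unfolding B_def
    by (rule sum_pos[OF fin Sne]) (use phipos in \<open>simp add: a_def b_def\<close>)
  have b1: "b x \<ge> 1" if "x \<in> S" for x
    using that supp_nonneg H0 unfolding b_def S_def by auto
  have suppn: "supp_nfd (Gamma_n g n \<phi>) = S"
    unfolding S_def by (rule supp_Gamma) (unfold expn, use Bpos in \<open>simp add: B_def S_def mult.assoc\<close>)
  have suppm: "supp_nfd (Gamma_n g m \<phi>) = S"
    unfolding S_def by (rule supp_Gamma) (use Apos in \<open>simp add: A_def S_def a_def Gm_def\<close>)
  define p where "p x = \<phi> x * a x / A" for x
  define c where "c x = b x - 1" for x
  define D where "D = (\<Sum>y\<in>S. p y * c y)"
  have sp: "sum p S = 1"
    unfolding p_def using Apos by (simp add: sum_divide_distrib[symmetric] A_def)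
  have spb: "(\<Sum>y\<in>S. p y * b y) = B / A"
    unfolding p_def B_def by (simp add: sum_divide_distrib[symmetric])
  have DB: "D = B / A - 1"
  proof -
    have "D = (\<Sum>y\<in>S. p y * b y - p y)" unfolding D_def c_def by (simp add: algebra_simps)
    thus ?thesis by (simp add: sum_subtractf spb sp)
  qed
  have pt: "\<bar>Gamma_n g n \<phi> x - Gamma_n g m \<phi> x\<bar> \<le> p x * \<bar>c x - D\<bar>" if xS: "x \<in> S" for x
  proof -
    have gn: "Gamma_n g n \<phi> x = \<phi> x * a x * b x / B"
      unfolding Gamma_n_def B_def S_def expn by (simp add: mult.assoc)
    have gm: "Gamma_n g m \<phi> x = \<phi> x * a x / A"
      unfolding Gamma_n_def A_def S_def by (simp add: a_def Gm_def)
    have eq: "Gamma_n g n \<phi> x - Gamma_n g m \<phi> x = p x * (c x - D) / (B / A)"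
      unfolding gn gm p_def c_def DB using Apos Bpos by (simp add: field_simps)
    have p0: "p x \<ge> 0" unfolding p_def using phi01[of x] Apos by (simp add: a_def)
    have BA: "B / A \<ge> 1" using DB b1 sp p0 
    proof -
      have "D \<ge> 0" unfolding D_def
        by (rule sum_nonneg) (use b1 phi01 Apos in \<open>auto simp: p_def c_def a_def\<close>)
      thus ?thesis using DB by simp
    qed
    have "\<bar>p x * (c x - D) / (B / A)\<bar> = p x * \<bar>c x - D\<bar> / (B / A)"
      using p0 BA Apos Bpos by (simp add: abs_mult)
    also have "\<dots> \<le> p x * \<bar>c x - D\<bar>"
      using divide_left_mono[OF BA, of "p x * \<bar>c x - D\<bar>"] BA p0 by simp
    finally show ?thesis unfolding eq .
  qed
  have "nfd_dist (Gamma_n g n \<phi>) (Gamma_n g m \<phi>) = (\<Sum>x\<in>S. \<bar>Gamma_n g n \<phi> x - Gamma_n g m \<phi> x\<bar>)"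
    unfolding nfd_dist_def suppn suppm by simp
  also have "\<dots> \<le> (\<Sum>x\<in>S. p x * \<bar>c x - D\<bar>)" by (rule sum_mono) (rule pt)
  also have "\<dots> \<le> sum c S" unfolding D_def
    by (rule key_ineq[OF fin _ sp]) (use phi01 Apos b1 in \<open>auto simp: p_def a_def c_def\<close>)
  finally show ?thesis by (simp add: S_def c_def b_def H_def)
qed

end
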